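(* For every $N\ge 5$, \[ \rho(\mathrm{Cir}^4_N,\mathrm{Cir}^2_N)\le \frac{18}{53}, \] where $\mathrm{Cir}^4_N$ is the graph on vertices $1,\dots,N$ arranged in a cycle with each vertex adjacent to the 2 nearest vertices in each cyclic direction, and $\mathrm{Cir}^2_N$ is the cycle graph on the same vertices in the same cyclic order.
   Context: Moran Birth-death process on two graphs (neutral case): $G^A$ and $G^B$ are connected undirected simple graphs on the same vertex set $\{1,\dots,N\}$. Every vertex is occupied by exactly one individual, of type $A$ (mutant) or type $B$ (resident). In each discrete time step, one individual is chosen uniformly at random among all $N$ individuals to reproduce; its offspring (of the same type) replaces the individual at a vertex chosen uniformly at random among the neighbors of the parent's vertex, where neighbors are taken in $G^A$ if the parent is of type $A$ and in $G^B$ if the parent is of type $B$. The all-$A$ and all-$B$ states are absorbing. The fixation probability $\rho(G^A,G^B)$ is the probability that the process reaches the all-$A$ state when started from exactly one type-$A$ individual at a uniformly random vertex, all other vertices of type $B$. *)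

theory Defs
  imports Complex_Main
begin

text \<open>Vertices are 0,...,N-1 (relabelling of 1,...,N). A graph on them is an
adjacency predicate. A configuration is the set of vertices occupied by type A.\<close>

definition nbrs :: "nat \<Rightarrow> (nat \<Rightarrow> nat \<Rightarrow> bool) \<Rightarrow> nat \<Rightarrow> nat set" where
  "nbrs N G u = {v. v < N \<and> G u v}"

definition cdist :: "nat \<Rightarrow> nat \<Rightarrow> nat \<Rightarrow> nat" where
  "cdist N i j = min ((i + N - j) mod N) ((j + N - i) mod N)"

text \<open>Circulant graph Cir^(2k)_N: each vertex adjacent to the k nearest vertices in each
cyclic direction. Cir^4_N = cir N 2, Cir^2_N = cir N 1 (the cycle).\<close>
definition cir :: "nat \<Rightarrow> nat \<Rightarrow> nat \<Rightarrow> nat \<Rightarrow> bool" where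
  "cir N k i j = (i < N \<and> j < N \<and> i \<noteq> j \<and> cdist N i j \<le> k)"

text \<open>Configuration after individual at u reproduces and its offspring replaces v.\<close>
definition update :: "nat set \<Rightarrow> nat \<Rightarrow> nat \<Rightarrow> nat set" where
  "update S u v = (if u \<in> S then insert v S else S - {v})"

text \<open>fixby N GA GB t S = probability that the Birth-death process started in
configuration S is in the all-A configuration at time t.\<close>
fun fixby :: "nat \<Rightarrow> (nat \<Rightarrow> nat \<Rightarrow> bool) \<Rightarrow> (nat \<Rightarrow> nat \<Rightarrow> bool) \<Rightarrow> nat \<Rightarrow> nat set \<Rightarrow> real" where
  "fixby N GA GB 0 S = (if S = {..<N} then 1 else 0)"
| "fixby N GA GB (Suc t) S =
     (if S = {} \<or> S = {..<N} then fixby N GA GB t S else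
      (\<Sum>u<N. let G = (if u \<in> S then GA else GB) in
          \<Sum>v\<in>nbrs N G u. (1 / real N) * (1 / real (card (nbrs N G u))) *
                            fixby N GA GB t (update S u v)))"

text \<open>Probability of eventually reaching the (absorbing) all-A state from S:
limit of the probability of being in it at time t (these events increase in t).\<close>
definition fixprob :: "nat \<Rightarrow> (nat \<Rightarrow> nat \<Rightarrow> bool) \<Rightarrow> (nat \<Rightarrow> nat \<Rightarrow> bool) \<Rightarrow> nat set \<Rightarrow> real" where
  "fixprob N GA GB S = lim (\<lambda>t. fixby N GA GB t S)"

definition rho :: "nat \<Rightarrow> (nat \<Rightarrow> nat \<Rightarrow> bool) \<Rightarrow> (nat \<Rightarrow> nat \<Rightarrow> bool) \<Rightarrow> real" where
  "rho N GA GB = (\<Sum>i<N. fixprob N GA GB {i}) / real N"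

end

theory Submission
  imports Defs
begin


definition P :: "nat \<Rightarrow> nat \<Rightarrow> int \<Rightarrow> nat" where
  "P N a k = nat ((int a + k) mod int N)"

lemma int_P: "N > 0 \<Longrightarrow> int (P N a k) = (int a + k) mod int N"
  by (simp add: P_def)

lemma P_lt: "N > 0 \<Longrightarrow> P N a k < N"
  unfolding P_def by (subst nat_less_iff) simp_all

lemma P_0: "a < N \<Longrightarrow> P N a 0 = a"
  unfolding P_def by simp

lemma P_P: "N > 0 \<Longrightarrow> P N (P N a j) k = P N a (j + k)"
proof -
  assume N: "N > 0"
  have "int (P N (P N a j) k) = ((int a + j) mod int N + k) mod int N" using N by (simp add: int_P)
  also have "\<dots> = (int a + (j + k)) mod int N" by (simp add: mod_add_left_eq add.assoc)
  also have "\<dots> = int (P N a (j+k))" using N by (simp add: int_P)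
  finally show ?thesis by simp
qed

lemma P_eq_iff: "N > 0 \<Longrightarrow> P N a j = P N a k \<longleftrightarrow> int N dvd (j - k)"
proof -
  assume N: "N > 0"
  have "P N a j = P N a k \<longleftrightarrow> int (P N a j) = int (P N a k)" by simp
  also have "\<dots> \<longleftrightarrow> (int a + j) mod int N = (int a + k) mod int N" using N by (simp add: int_P)
  also have "\<dots> \<longleftrightarrow> int N dvd (int a + j) - (int a + k)" by (rule mod_eq_dvd_iff)
  finally show ?thesis by simp
qed

lemma P_ne: "N \<ge> 5 \<Longrightarrow> j \<noteq> k \<Longrightarrow> \<bar>j - k\<bar> \<le> 4 \<Longrightarrow> P N a j \<noteq> P N a k"
proof
  assume N: "N \<ge> 5" and jk: "j \<noteq> k" "\<bar>j - k\<bar> \<le> 4" and e: "P N a j = P N a k"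
  then have "int N dvd (j - k)" using P_eq_iff[of N a j k] by simp
  then have "int N dvd \<bar>j - k\<bar>" by simp
  then have "int N \<le> \<bar>j - k\<bar>" using jk by (intro zdvd_imp_le) auto
  then show False using N jk by linarith
qed

lemma cdist_int: "x < N \<Longrightarrow> y < N \<Longrightarrow>
   cdist N x y = min (nat ((int x - int y) mod int N)) (nat ((int y - int x) mod int N))"
proof -
  assume xy: "x < N" "y < N"
  have 1: "int ((x + N - y) mod N) = (int x - int y) mod int N"
  proof -
    have "int ((x + N - y) mod N) = int (x + N - y) mod int N" by (simp add: zmod_int)
    also have "int (x + N - y) = (int x - int y) + int N" using xy by simp
    finally show ?thesis by simp
  qed
  have 2: "int ((y + N - x) mod N) = (int y - int x) mod int N"
  proof -
    have "int ((y + N - x) mod N) = int (y + N - x) mod int N" by (simp add: zmod_int)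
    also have "int (y + N - x) = (int y - int x) + int N" using xy by simp
    finally show ?thesis by simp
  qed
  have e1: "(x + N - y) mod N = nat ((int x - int y) mod int N)" using arg_cong[OF 1, of nat] by simp
  have e2: "(y + N - x) mod N = nat ((int y - int x) mod int N)" using arg_cong[OF 2, of nat] by simp
  show ?thesis unfolding cdist_def e1 e2 by (rule refl)
qed

lemma cdist_P: "N > 0 \<Longrightarrow> cdist N (P N a j) (P N a k) = min (nat ((j - k) mod int N)) (nat ((k - j) mod int N))"
proof -
  assume N: "N > 0"
  have md: "(int (P N a x) - int (P N a y)) mod int N = (x - y) mod int N" for x y
  proof -
    have "(int (P N a x) - int (P N a y)) mod int N = ((int a + x) mod int N - (int a + y) mod int N) mod int N"
      using N by (simp only: int_P)
    also have "\<dots> = ((int a + x) - (int a + y)) mod int N" by (rule mod_diff_eq)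
    also have "\<dots> = (x - y) mod int N" by simp
    finally show ?thesis .
  qed
  have "(int (P N a j) - int (P N a k)) mod int N = (j - k) mod int N" by (rule md)
  moreover have "(int (P N a k) - int (P N a j)) mod int N = (k - j) mod int N" by (rule md)
  ultimately show ?thesis using cdist_int[OF P_lt[OF N] P_lt[OF N]] by simp
qed

lemma neg_mod: "0 < d \<Longrightarrow> d < int N \<Longrightarrow> (- d) mod int N = int N - d"
proof -
  assume d: "0 < d" "d < int N"
  have "(- d) mod int N = (int N - d) mod int N"
    by (metis add.commute diff_conv_add_uminus mod_add_self2)
  also have "\<dots> = int N - d" using d by (intro mod_pos_pos_trivial) linarith+
  finally show ?thesis .
qed

lemma cdist_P_small: "N \<ge> 5 \<Longrightarrow> \<bar>j - k\<bar> \<le> 2 \<Longrightarrow> cdist N (P N a j) (P N a k) = nat \<bar>j - k\<bar>"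
proof -
  assume N: "N \<ge> 5" and jk: "\<bar>j - k\<bar> \<le> 2"
  have c: "cdist N (P N a j) (P N a k) = min (nat ((j - k) mod int N)) (nat ((k - j) mod int N))"
    using N by (intro cdist_P) simp
  consider "j = k" | "j < k" | "k < j" by linarith
  then show ?thesis
  proof cases
    case 1 then show ?thesis using c by simp
  next
    case 2
    have "(k - j) mod int N = k - j" using N jk 2 by (intro mod_pos_pos_trivial) linarith+
    moreover have "(j - k) mod int N = int N - (k - j)"
    proof -
      have "0 < k - j" "k - j < int N" using N jk 2 by linarith+
      from neg_mod[OF this] show ?thesis by simp
    qed
    ultimately show ?thesis using c N jk 2 by (simp add: min_def)
  next
    case 3
    have "(j - k) mod int N = j - k" using N jk 3 by (intro mod_pos_pos_trivial) linarith+
    moreover have "(k - j) mod int N = int N - (j - k)"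
    proof -
      have "0 < j - k" "j - k < int N" using N jk 3 by linarith+
      from neg_mod[OF this] show ?thesis by simp
    qed
    ultimately show ?thesis using c N jk 3 by (simp add: min_def)
  qed
qed



lemma cdist_sym: "cdist N x y = cdist N y x"
  unfolding cdist_def by simp

lemma cir_sym: "cir N k x y = cir N k y x"
  unfolding cir_def using cdist_sym by metis

lemma nbrs_char:
  assumes N: "N \<ge> 5" and x: "x < N" and y: "y < N" and xy: "y \<noteq> x"
  shows "\<exists>d. 0 < d \<and> d < int N \<and> y = P N x d \<and> cdist N x y = min (nat (int N - d)) (nat d)"
proof -
  define d where "d = (int y - int x) mod int N"
  have Npos: "N > 0" using N by simp
  have d0: "0 \<le> d" "d < int N" unfolding d_def using Npos by simp_all
  have yP: "y = P N x d"
  proof -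
    have "int (P N x d) = (int x + (int y - int x) mod int N) mod int N" using Npos by (simp add: int_P d_def)
    also have "\<dots> = (int x + (int y - int x)) mod int N" by (simp add: mod_add_right_eq)
    also have "\<dots> = int y" using y by simp
    finally show ?thesis by simp
  qed
  have "d \<noteq> 0" using xy yP x P_0 by (cases "d = 0") auto
  then have dpos: "0 < d" using d0 by simp
  have xP: "x = P N x 0" using x by (simp add: P_0)
  have "cdist N x y = min (nat ((0 - d) mod int N)) (nat ((d - 0) mod int N))"
    using cdist_P[OF Npos, of x 0 d] xP yP by simp
  moreover have "(0 - d) mod int N = int N - d" using neg_mod[OF dpos d0(2)] by simp
  moreover have "(d - 0) mod int N = d" using d0 by simp
  ultimately have "cdist N x y = min (nat (int N - d)) (nat d)" by simp
  then show ?thesis using dpos d0 yP by blast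
qed

lemma nbrs1:
  assumes N: "N \<ge> 5" and x: "x < N"
  shows "nbrs N (cir N 1) x = {P N x 1, P N x (-1)}"
proof -
  have Npos: "N > 0" using N by simp
  have xP: "x = P N x 0" using x by (simp add: P_0)
  have a: "P N x 1 \<in> nbrs N (cir N 1) x"
  proof -
    have "cdist N x (P N x 1) = 1" using cdist_P_small[OF N, of 0 1 x] xP by simp
    moreover have "P N x 1 \<noteq> x" using P_ne[OF N, of 1 0 x] xP by simp
    ultimately show ?thesis unfolding nbrs_def cir_def using x P_lt[OF Npos] by simp
  qed
  have b: "P N x (-1) \<in> nbrs N (cir N 1) x"
  proof -
    have "cdist N x (P N x (-1)) = 1" using cdist_P_small[OF N, of 0 "-1" x] xP by simp
    moreover have "P N x (-1) \<noteq> x" using P_ne[OF N, of "-1" 0 x] xP by simp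
    ultimately show ?thesis unfolding nbrs_def cir_def using x P_lt[OF Npos] by simp
  qed
  have c: "y \<in> {P N x 1, P N x (-1)}" if "y \<in> nbrs N (cir N 1) x" for y
  proof -
    from that have y: "y < N" "y \<noteq> x" "cdist N x y \<le> 1" unfolding nbrs_def cir_def by auto
    obtain d where d: "0 < d" "d < int N" "y = P N x d" "cdist N x y = min (nat (int N - d)) (nat d)"
      using nbrs_char[OF N x y(1) y(2)] by blast
    then have "nat (int N - d) \<le> 1 \<or> nat d \<le> 1" using y(3) by (simp add: min_le_iff_disj)
    then have "int N - d \<le> 1 \<or> d \<le> 1" by (simp add: nat_le_iff)
    then have "d = 1 \<or> d = int N - 1" using d by arith
    then show ?thesis
    proof
      assume "d = 1" then show ?thesis using d by simp
    next
      assume dd: "d = int N - 1"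
      have "P N x d = P N x (-1)" using P_eq_iff[OF Npos] dd by simp
      then show ?thesis using d by simp
    qed
  qed
  show ?thesis using a b c by blast
qed

lemma nbrs2:
  assumes N: "N \<ge> 5" and x: "x < N"
  shows "nbrs N (cir N 2) x = {P N x 1, P N x (-1), P N x 2, P N x (-2)}"
proof -
  have Npos: "N > 0" using N by simp
  have xP: "x = P N x 0" using x by (simp add: P_0)
  have in2: "P N x j \<in> nbrs N (cir N 2) x" if "j \<noteq> 0" "\<bar>j\<bar> \<le> 2" for j
  proof -
    have "cdist N x (P N x j) = nat \<bar>0 - j\<bar>" using cdist_P_small[OF N, of 0 j x] xP that by simp
    moreover have "P N x j \<noteq> x" using P_ne[OF N, of j 0 x] xP that by simp
    ultimately show ?thesis unfolding nbrs_def cir_def using x P_lt[OF Npos] that by simp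
  qed
  have c: "y \<in> {P N x 1, P N x (-1), P N x 2, P N x (-2)}" if "y \<in> nbrs N (cir N 2) x" for y
  proof -
    from that have y: "y < N" "y \<noteq> x" "cdist N x y \<le> 2" unfolding nbrs_def cir_def by auto
    obtain d where d: "0 < d" "d < int N" "y = P N x d" "cdist N x y = min (nat (int N - d)) (nat d)"
      using nbrs_char[OF N x y(1) y(2)] by blast
    then have "nat (int N - d) \<le> 2 \<or> nat d \<le> 2" using y(3) by (simp add: min_le_iff_disj)
    then have "int N - d \<le> 2 \<or> d \<le> 2" by (simp add: nat_le_iff)
    then have "d = 1 \<or> d = 2 \<or> d = int N - 1 \<or> d = int N - 2" using d by arith
    moreover have "P N x (int N - 1) = P N x (-1)" using P_eq_iff[OF Npos] by simp
    moreover have "P N x (int N - 2) = P N x (-2)" using P_eq_iff[OF Npos] by simp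
    ultimately show ?thesis using d by auto
  qed
  show ?thesis using in2[of 1] in2[of "-1"] in2[of 2] in2[of "-2"] c by auto
qed



definition phi :: "nat \<Rightarrow> nat set \<Rightarrow> real" where
  "phi N S = (if card S = 0 then 0 else if card S = 1 then 18/53 else if card S = 2 then
      (if cdist N (Min S) (Max S) = 1 then 39/53 else if cdist N (Min S) (Max S) = 2 then 33/53 else 1)
     else 1)"

lemma phi_empty[simp]: "phi N {} = 0" by (simp add: phi_def)
lemma phi_single[simp]: "phi N {x} = 18/53" by (simp add: phi_def)
lemma phi_pair: "x \<noteq> y \<Longrightarrow> phi N {x, y} =
   (if cdist N x y = 1 then 39/53 else if cdist N x y = 2 then 33/53 else 1)"
proof -
  assume xy: "x \<noteq> y"
  have "cdist N (Min {x,y}) (Max {x,y}) = cdist N x y"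
    by (cases "x \<le> y") (auto simp: cdist_sym max_def min_def)
  then show ?thesis using xy by (simp add: phi_def)
qed
lemma phi_big: "card S \<ge> 3 \<Longrightarrow> phi N S = 1" by (simp add: phi_def)
lemma phi_le1: "phi N S \<le> 1" by (simp add: phi_def)
lemma phi_ge0: "phi N S \<ge> 0" by (simp add: phi_def)

definition cc :: "nat \<Rightarrow> nat set \<Rightarrow> nat \<Rightarrow> real" where
  "cc N S u = (let G = (if u \<in> S then cir N 2 else cir N 1) in
     \<Sum>v\<in>nbrs N G u. (1 / real (card (nbrs N G u))) * phi N (update S u v))"

lemma nbrs_fin: "finite (nbrs N G u)"
  unfolding nbrs_def by simp

lemma avg_le: "finite A \<Longrightarrow> (\<And>v. v \<in> A \<Longrightarrow> f v \<le> c) \<Longrightarrow> c \<ge> 0 \<Longrightarrow>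
   (\<Sum>v\<in>A. (1 / real (card A)) * f v) \<le> (c::real)"
proof -
  assume A: "finite A" and f: "\<And>v. v \<in> A \<Longrightarrow> f v \<le> c" and c: "c \<ge> 0"
  have "(\<Sum>v\<in>A. (1 / real (card A)) * f v) \<le> (\<Sum>v\<in>A. (1 / real (card A)) * c)"
    by (intro sum_mono mult_left_mono f) auto
  also have "\<dots> = real (card A) * (1 / real (card A)) * c" by simp
  also have "\<dots> \<le> c" using c by (cases "card A = 0") auto
  finally show ?thesis .
qed

lemma cc_le1: "cc N S u \<le> 1"
  unfolding cc_def Let_def by (intro avg_le nbrs_fin phi_le1) auto

lemma cc_irrel: "u \<notin> S \<Longrightarrow> (\<forall>v \<in> nbrs N (cir N 1) u. v \<notin> S) \<Longrightarrow> cc N S u \<le> phi N S"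
proof -
  assume u: "u \<notin> S" and v: "\<forall>v \<in> nbrs N (cir N 1) u. v \<notin> S"
  have "cc N S u = (\<Sum>v\<in>nbrs N (cir N 1) u. (1 / real (card (nbrs N (cir N 1) u))) * phi N (update S u v))"
    using u by (simp add: cc_def Let_def)
  also have "\<dots> \<le> phi N S"
    by (intro avg_le nbrs_fin phi_ge0) (use u v in \<open>auto simp: update_def\<close>)
  finally show ?thesis .
qed

lemma split_sum:
  assumes R: "R \<subseteq> {..<N}"
    and out: "\<And>u. u < N \<Longrightarrow> u \<notin> R \<Longrightarrow> cc N S u \<le> phi N S"
    and inn: "(\<Sum>u\<in>R. cc N S u) \<le> real (card R) * phi N S"
  shows "(\<Sum>u<N. cc N S u) \<le> real N * phi N S"
proof -
  have fR: "finite R" using R finite_subset by blast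
  have "(\<Sum>u<N. cc N S u) = (\<Sum>u\<in>R. cc N S u) + (\<Sum>u\<in>{..<N} - R. cc N S u)"
    using R by (metis finite_lessThan sum.subset_diff add.commute)
  also have "(\<Sum>u\<in>{..<N} - R. cc N S u) \<le> (\<Sum>u\<in>{..<N} - R. phi N S)"
    using out by (intro sum_mono) auto
  also have "\<dots> = real (N - card R) * phi N S"
    using R fR by (simp add: card_Diff_subset)
  finally have "(\<Sum>u<N. cc N S u) \<le> real (card R) * phi N S + real (N - card R) * phi N S"
    using inn by linarith
  also have "\<dots> = real N * phi N S"
    using card_mono[OF finite_lessThan R] by (simp add: of_nat_diff algebra_simps)
  finally show ?thesis .
qed

lemma irrel_from:
  assumes "S \<subseteq> R" and "\<And>s. s \<in> S \<Longrightarrow> nbrs N (cir N 1) s \<subseteq> R" and "u \<notin> R"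
  shows "u \<notin> S \<and> (\<forall>v \<in> nbrs N (cir N 1) u. v \<notin> S)"
proof
  show "u \<notin> S" using assms by blast
  show "\<forall>v \<in> nbrs N (cir N 1) u. v \<notin> S"
  proof (intro ballI notI)
    fix v assume v: "v \<in> nbrs N (cir N 1) u" "v \<in> S"
    then have "cir N 1 v u" using cir_sym unfolding nbrs_def by auto
    then have "u \<in> nbrs N (cir N 1) v" unfolding nbrs_def cir_def by simp
    then show False using assms v by blast
  qed
qed



lemma P_eq_simp: "N \<ge> 5 \<Longrightarrow> \<bar>j - k\<bar> \<le> 4 \<Longrightarrow> (P N a j = P N a k) = (j = k)"
  using P_ne[of N j k a] by auto

lemma nbrs1P: "N \<ge> 5 \<Longrightarrow> nbrs N (cir N 1) (P N a j) = {P N a (j + 1), P N a (j - 1)}"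
  using nbrs1[of N "P N a j"] P_lt[of N a j] P_P[of N a j] by simp

lemma nbrs2P: "N \<ge> 5 \<Longrightarrow> nbrs N (cir N 2) (P N a j) = {P N a (j + 1), P N a (j - 1), P N a (j + 2), P N a (j - 2)}"
  using nbrs2[of N "P N a j"] P_lt[of N a j] P_P[of N a j] by simp

lemma cc_in: "u \<in> S \<Longrightarrow> cc N S u = (\<Sum>v\<in>nbrs N (cir N 2) u. (1 / real (card (nbrs N (cir N 2) u))) * phi N (insert v S))"
  by (simp add: cc_def update_def Let_def)

lemma cc_out: "u \<notin> S \<Longrightarrow> cc N S u = (\<Sum>v\<in>nbrs N (cir N 1) u. (1 / real (card (nbrs N (cir N 1) u))) * phi N (S - {v}))"
  by (simp add: cc_def update_def Let_def)

lemma sum2: "x \<noteq> y \<Longrightarrow> (\<Sum>v\<in>{x,y}. (c::real) * f v) = c * (f x + f y)"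
  by (simp add: algebra_simps)

lemma card2: "x \<noteq> y \<Longrightarrow> card {x,y} = 2" by simp

lemma sum4: "distinct [x1,x2,x3,x4] \<Longrightarrow> (\<Sum>v\<in>{x1,x2,x3,x4}. (c::real) * f v) = c * (f x1 + f x2 + f x3 + f x4)"
  by (simp add: algebra_simps)

lemma card4: "distinct [x1,x2,x3,x4] \<Longrightarrow> card {x1,x2,x3,x4} = 4" by simp

lemma nbrs1P': "N \<ge> 5 \<Longrightarrow> nbrs N (cir N (Suc 0)) (P N a j) = {P N a (j + 1), P N a (j - 1)}"
  using nbrs1P by simp

lemma ins_dup: "insert x (insert y (insert x A)) = insert y (insert x A)" by auto

lemma case1:
  assumes N: "N \<ge> 5"
  shows "(\<Sum>u\<in>{P N a 0, P N a 1, P N a (-1)}. cc N {P N a 0} u) \<le> real (card {P N a 0, P N a 1, P N a (-1)}) * phi N {P N a 0}"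
proof -
  note E = P_eq_simp[OF N]
  note S = cc_in cc_out nbrs1P[OF N] nbrs1P'[OF N] nbrs2P[OF N] E phi_pair cdist_P_small[OF N] phi_big insert_Diff_if card_insert_if ins_dup
  have c0: "cc N {P N a 0} (P N a 0) = 36/53" by (simp add: S)
  have c1: "cc N {P N a 0} (P N a 1) = 9/53" by (simp add: S)
  have c2: "cc N {P N a 0} (P N a (-1)) = 9/53" by (simp add: S)
  show ?thesis using c0 c1 c2 by (simp add: E)
qed

lemma case2:
  assumes N: "N \<ge> 5"
  shows "(\<Sum>u\<in>{P N a 0, P N a 1, P N a (-1), P N a 2}. cc N {P N a 0, P N a 1} u)
     \<le> real (card {P N a 0, P N a 1, P N a (-1), P N a 2}) * phi N {P N a 0, P N a 1}"
proof -
  note E = P_eq_simp[OF N]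
  note S = cc_in cc_out nbrs1P[OF N] nbrs1P'[OF N] nbrs2P[OF N] E phi_pair cdist_P_small[OF N] phi_big insert_Diff_if card_insert_if ins_dup
  have c0: "cc N {P N a 0, P N a 1} (P N a 0) = 99/106" by (simp add: S)
  have c1: "cc N {P N a 0, P N a 1} (P N a 1) = 99/106" by (simp add: S)
  have c2: "cc N {P N a 0, P N a 1} (P N a (-1)) = 57/106" by (simp add: S)
  have c3: "cc N {P N a 0, P N a 1} (P N a 2) = 57/106" by (simp add: S)
  show ?thesis using c0 c1 c2 c3 by (simp add: E phi_pair cdist_P_small[OF N])
qed

lemma case3:
  assumes N: "N \<ge> 5"
  shows "(\<Sum>u\<in>{P N a 0, P N a 2, P N a (-1), P N a 1, P N a 3}. cc N {P N a 0, P N a 2} u)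
     \<le> real (card {P N a 0, P N a 2, P N a (-1), P N a 1, P N a 3}) * phi N {P N a 0, P N a 2}"
proof -
  note E = P_eq_simp[OF N]
  note S = cc_in cc_out nbrs1P[OF N] nbrs1P'[OF N] nbrs2P[OF N] E phi_pair cdist_P_small[OF N] phi_big insert_Diff_if card_insert_if ins_dup
  have c0: "cc N {P N a 0, P N a 2} (P N a 0) = 48/53" by (simp add: S)
  have c1: "cc N {P N a 0, P N a 2} (P N a 2) = 48/53" by (simp add: S)
  have c2: "cc N {P N a 0, P N a 2} (P N a (-1)) = 51/106" by (simp add: S)
  have c3: "cc N {P N a 0, P N a 2} (P N a 1) = 18/53" by (simp add: S)
  have c4: "cc N {P N a 0, P N a 2} (P N a 3) = 51/106" by (simp add: S)
  show ?thesis using c0 c1 c2 c3 c4 by (simp add: E phi_pair cdist_P_small[OF N])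
qed



lemma trivial_case: "phi N S = 1 \<Longrightarrow> (\<Sum>u<N. cc N S u) \<le> real N * phi N S"
proof -
  assume "phi N S = 1"
  moreover have "(\<Sum>u<N. cc N S u) \<le> (\<Sum>u<N. 1)" by (intro sum_mono cc_le1)
  ultimately show ?thesis by simp
qed

lemma apply_case:
  assumes N: "N \<ge> 5" and R: "R \<subseteq> {..<N}" and SR: "S \<subseteq> R"
    and nb: "\<And>s. s \<in> S \<Longrightarrow> nbrs N (cir N 1) s \<subseteq> R"
    and inn: "(\<Sum>u\<in>R. cc N S u) \<le> real (card R) * phi N S"
  shows "(\<Sum>u<N. cc N S u) \<le> real N * phi N S"
proof (rule split_sum[OF R _ inn])
  fix u assume "u < N" "u \<notin> R"
  from irrel_from[OF SR nb this(2)] show "cc N S u \<le> phi N S"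
    using cc_irrel phi_ge0 by blast
qed

lemma sup1:
  assumes N: "N \<ge> 5" and a: "a < N"
  shows "(\<Sum>u<N. cc N {P N a 0} u) \<le> real N * phi N {P N a 0}"
proof -
  have Np: "N > 0" using N by simp
  show ?thesis
    by (rule apply_case[OF N _ _ _ case1[OF N]]) (auto simp: P_lt[OF Np] nbrs1P[OF N] nbrs1P'[OF N])
qed

lemma sup2:
  assumes N: "N \<ge> 5" and a: "a < N"
  shows "(\<Sum>u<N. cc N {P N a 0, P N a 1} u) \<le> real N * phi N {P N a 0, P N a 1}"
proof -
  have Np: "N > 0" using N by simp
  show ?thesis
    by (rule apply_case[OF N _ _ _ case2[OF N]]) (auto simp: P_lt[OF Np] nbrs1P[OF N] nbrs1P'[OF N])
qed

lemma sup3: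
  assumes N: "N \<ge> 5" and a: "a < N"
  shows "(\<Sum>u<N. cc N {P N a 0, P N a 2} u) \<le> real N * phi N {P N a 0, P N a 2}"
proof -
  have Np: "N > 0" using N by simp
  show ?thesis
    by (rule apply_case[OF N _ _ _ case3[OF N]]) (auto simp: P_lt[OF Np] nbrs1P[OF N] nbrs1P'[OF N])
qed

lemma superharm:
  assumes N: "N \<ge> 5" and S: "S \<subseteq> {..<N}" and ne: "S \<noteq> {}"
  shows "(\<Sum>u<N. cc N S u) \<le> real N * phi N S"
proof -
  have Np: "N > 0" using N by simp
  have fin: "finite S" using S finite_subset by blast
  then have "card S \<noteq> 0" using ne by simp
  then consider "card S = 1" | "card S = 2" | "card S \<ge> 3" by linarith
  then show ?thesis
  proof cases
    case 1
    then obtain x where x: "S = {x}" by (metis card_1_singletonE)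
    then have xN: "x < N" using S by auto
    have "S = {P N x 0}" using x xN by (simp add: P_0)
    then show ?thesis using sup1[OF N xN] by simp
  next
    case 2
    then obtain x y where xy: "S = {x, y}" "x \<noteq> y" by (metis card_2_iff)
    then have xN: "x < N" and yN: "y < N" using S by auto
    have x0: "x = P N x 0" using xN by (simp add: P_0)
    have y0: "y = P N y 0" using yN by (simp add: P_0)
    show ?thesis
    proof (cases "cdist N x y = 1")
      case True
      then have "y \<in> nbrs N (cir N 1) x" using xN yN xy unfolding nbrs_def cir_def by auto
      then have "y = P N x 1 \<or> y = P N x (-1)" using nbrs1[OF N xN] by auto
      then show ?thesis
      proof
        assume "y = P N x 1"
        then have "S = {P N x 0, P N x 1}" using xy x0 by simp
        then show ?thesis using sup2[OF N xN] by simp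
      next
        assume yy: "y = P N x (-1)"
        then have "P N y 1 = x" using P_P[OF Np, of x "-1" 1] x0 by simp
        then have "S = {P N y 0, P N y 1}" using xy y0 by auto
        then show ?thesis using sup2[OF N yN] by simp
      qed
    next
      case F1: False
      show ?thesis
      proof (cases "cdist N x y = 2")
        case True
        then have "y \<in> nbrs N (cir N 2) x" using xN yN xy unfolding nbrs_def cir_def by auto
        then have "y = P N x 1 \<or> y = P N x (-1) \<or> y = P N x 2 \<or> y = P N x (-2)" using nbrs2[OF N xN] by auto
        moreover have "y \<noteq> P N x 1" using F1 cdist_P_small[OF N, of 0 1 x] x0 by auto
        moreover have "y \<noteq> P N x (-1)" using F1 cdist_P_small[OF N, of 0 "-1" x] x0 by auto
        ultimately have "y = P N x 2 \<or> y = P N x (-2)" by blast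
        then show ?thesis
        proof
          assume "y = P N x 2"
          then have "S = {P N x 0, P N x 2}" using xy x0 by simp
          then show ?thesis using sup3[OF N xN] by simp
        next
          assume yy: "y = P N x (-2)"
          then have "P N y 2 = x" using P_P[OF Np, of x "-2" 2] x0 by simp
          then have "S = {P N y 0, P N y 2}" using xy y0 by auto
          then show ?thesis using sup3[OF N yN] by simp
        qed
      next
        case False
        then have "phi N S = 1" using F1 xy by (simp add: phi_pair)
        then show ?thesis by (rule trivial_case)
      qed
    qed
  next
    case 3
    then show ?thesis using trivial_case phi_big by blast
  qed
qed

lemma fixby_nonneg: "fixby N GA GB t S \<ge> 0"
proof (induction t arbitrary: S)
  case 0 then show ?case by simp
next
  case (Suc t)
  then show ?case by (auto simp: Let_def intro!: sum_nonneg)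
qed

lemma fixby_Suc_eq: "\<not> (S = {} \<or> S = {..<N}) \<Longrightarrow> fixby N GA GB (Suc n) S =
      (\<Sum>u<N. let G = (if u \<in> S then GA else GB) in
          \<Sum>v\<in>nbrs N G u. (1 / real N) * (1 / real (card (nbrs N G u))) *
                            fixby N GA GB n (update S u v))"
  by (simp only: fixby.simps if_False)

lemma fixby_mono: "fixby N GA GB t S \<le> fixby N GA GB (Suc t) S"
proof (induction t arbitrary: S)
  case 0
  show ?case
  proof (cases "S = {} \<or> S = {..<N}")
    case True then show ?thesis by simp
  next
    case False
    then have "fixby N GA GB 0 S = 0" by auto
    then show ?thesis using fixby_nonneg[of N GA GB "Suc 0" S] by simp
  qed
next
  case (Suc t)
  show ?case
  proof (cases "S = {} \<or> S = {..<N}")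
    case True then show ?thesis using Suc.IH by simp
  next
    case False
    then show ?thesis
      unfolding fixby_Suc_eq[OF False, of _ _ "Suc t"] fixby_Suc_eq[OF False, of _ _ t] Let_def
      by (intro sum_mono mult_left_mono Suc.IH) simp
  qed
qed

lemma fixby_le_phi:
  assumes N: "N \<ge> 5"
  shows "S \<subseteq> {..<N} \<Longrightarrow> fixby N (cir N 2) (cir N 1) t S \<le> phi N S"
proof (induction t arbitrary: S)
  case 0
  show ?case
  proof (cases "S = {..<N}")
    case True
    then have "phi N S = 1" using N by (intro phi_big) simp
    then show ?thesis by simp
  next
    case False then show ?thesis using phi_ge0 by simp
  qed
next
  case (Suc t)
  show ?case
  proof (cases "S = {} \<or> S = {..<N}")
    case True then show ?thesis using Suc by simp
  next
    case False
    have "fixby N (cir N 2) (cir N 1) (Suc t) S =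
      (\<Sum>u<N. let G = (if u \<in> S then cir N 2 else cir N 1) in
          \<Sum>v\<in>nbrs N G u. (1 / real N) * (1 / real (card (nbrs N G u))) *
                            fixby N (cir N 2) (cir N 1) t (update S u v))"
      using False by (simp only: fixby.simps if_False)
    also have "\<dots> \<le> (\<Sum>u<N. let G = (if u \<in> S then cir N 2 else cir N 1) in
          \<Sum>v\<in>nbrs N G u. (1 / real N) * (1 / real (card (nbrs N G u))) * phi N (update S u v))"
      unfolding Let_def
    proof (intro sum_mono mult_left_mono Suc.IH)
      fix u v assume "v \<in> nbrs N (if u \<in> S then cir N 2 else cir N 1) u"
      then have "v < N" unfolding nbrs_def by simp
      then show "update S u v \<subseteq> {..<N}" using Suc.prems unfolding update_def by auto
    qed simp
    also have "\<dots> = (1 / real N) * (\<Sum>u<N. cc N S u)"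
      unfolding cc_def Let_def sum_distrib_left by (simp add: mult.assoc)
    also have "\<dots> \<le> (1 / real N) * (real N * phi N S)"
      using superharm[OF N Suc.prems] False by (intro mult_left_mono) auto
    also have "\<dots> = phi N S" using N by simp
    finally show ?thesis .
  qed
qed

theorem mainTheorem5:
  fixes N :: nat
  assumes "N \<ge> 5"
  shows "rho N (cir N 2) (cir N 1) \<le> 18 / 53"
proof -
  have fp: "fixprob N (cir N 2) (cir N 1) {i} \<le> 18/53" if i: "i < N" for i
  proof -
    define X where "X t = fixby N (cir N 2) (cir N 1) t {i}" for t
    have inc: "incseq X" unfolding X_def by (rule incseq_SucI) (rule fixby_mono)
    have bd: "\<forall>t. X t \<le> 18/53" unfolding X_def using fixby_le_phi[OF assms, of "{i}"] i by simp
    obtain L where L: "X \<longlonglongrightarrow> L" using incseq_convergent[OF inc bd] by blast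
    have "fixprob N (cir N 2) (cir N 1) {i} = L"
      unfolding fixprob_def X_def[symmetric] using L by (rule limI)
    moreover have "L \<le> 18/53" using L bd by (intro LIMSEQ_le_const2) auto
    ultimately show ?thesis by simp
  qed
  have "(\<Sum>i<N. fixprob N (cir N 2) (cir N 1) {i}) \<le> (\<Sum>i<N. 18/53)"
    using fp by (intro sum_mono) simp
  then have "(\<Sum>i<N. fixprob N (cir N 2) (cir N 1) {i}) \<le> real N * (18/53)" by simp
  then show ?thesis unfolding rho_def using assms by (simp add: divide_le_eq mult.commute)
qed

end
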